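(* Let $\mathscr{F}:\mathscr{C}_1\to\mathscr{C}_2$ be a functor that inverts coproducts, and suppose $\mathscr{C}_2$ is extensive. If $\mathcal{F}$ is an extensive presheaf on $\mathscr{C}_1$, then its right Kan extension $\mathscr{F}_*\mathcal{F}$ is an extensive presheaf on $\mathscr{C}_2$.
   Context: All categories are locally small. A functor $\mathscr{F}:\mathscr{C}_1\to\mathscr{C}_2$ inverts coproducts if it is fully faithful and, whenever $\mathscr{F}(X)=\coprod_{i\in I}Z_i$ (a coproduct in $\mathscr{C}_2$) for some object $X$ of $\mathscr{C}_1$, there exist objects $X_i$ of $\mathscr{C}_1$ and isomorphisms $\mathscr{F}(X_i)\to Z_i$. A category is extensive if it has an initial object $\emptyset$, existing binary coproducts are disjoint (the square formed by $\emptyset\to X$, $\emptyset\to Y$ and the coproduct injections into $X\sqcup Y$ is a pullback), and coproducts are stable under pullback: for any existing coproduct $\coprod_iU_i$ and any $f:X\to\coprod_iU_i$, the pullbacks $X\times_{\coprod U_i}U_i$ exist and $X$ is their coproduct via the projections to $X$ (existence of all coproducts is not required). A presheaf on $\mathscr{C}$ is a functor $\mathscr{C}^{op}\to\mathrm{Set}$, with $f^*:=\mathcal{F}(f)$; it is extensive if for every coproduct $X=\coprod_iX_i$ existing in $\mathscr{C}$ the canonical map $\mathcal{F}(X)\to\prod_i\mathcal{F}(X_i)$ induced by the coproduct injections is a bijection. For a presheaf $\mathcal{F}$ on $\mathscr{C}_1$ and an object $Y$ of $\mathscr{C}_2$, let $\mathscr{F}/Y$ be the category of pairs $(X,\psi)$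 with $X\in\mathscr{C}_1$ and $\psi:\mathscr{F}(X)\to Y$, a morphism $(X_1,\psi_1)\to(X_2,\psi_2)$ being $f:X_1\to X_2$ with $\psi_2\circ\mathscr{F}(f)=\psi_1$. Then $(\mathscr{F}_*\mathcal{F})(Y)$ is the set of families $(s_{X,\psi}\in\mathcal{F}(X))_{(X,\psi)\in\mathscr{F}/Y}$ with $f^*s_{X_2,\psi_2}=s_{X_1,\psi_1}$ for every morphism $f$ of $\mathscr{F}/Y$, and $g:Y_1\to Y_2$ acts by $(s_{X,\psi})\mapsto(s_{X,g\circ\phi})_{(X,\phi)\in\mathscr{F}/Y_1}$ (the right Kan extension). *)

theory Defs
  imports Main "HOL-Library.FuncSet"
begin

record ('o, 'm) category =
  Obj :: "'o set"
  Arr :: "'m set"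
  Dom :: "'m \<Rightarrow> 'o"
  Cod :: "'m \<Rightarrow> 'o"
  Cmp :: "'m \<Rightarrow> 'm \<Rightarrow> 'm"
  Idt :: "'o \<Rightarrow> 'm"

definition hom :: "('o, 'm) category \<Rightarrow> 'o \<Rightarrow> 'o \<Rightarrow> 'm set" where
  "hom C X Y = {f \<in> Arr C. Dom C f = X \<and> Cod C f = Y}"

definition is_category :: "('o, 'm) category \<Rightarrow> bool" where
  "is_category C \<longleftrightarrow>
     (\<forall>f \<in> Arr C. Dom C f \<in> Obj C \<and> Cod C f \<in> Obj C) \<and>
     (\<forall>X \<in> Obj C. Idt C X \<in> hom C X X) \<and>
     (\<forall>X Y Z f g. f \<in> hom C X Y \<and> g \<in> hom C Y Z \<longrightarrow> Cmp C g f \<in> hom C X Z) \<and>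
     (\<forall>W X Y Z f g h. f \<in> hom C W X \<and> g \<in> hom C X Y \<and> h \<in> hom C Y Z \<longrightarrow>
        Cmp C h (Cmp C g f) = Cmp C (Cmp C h g) f) \<and>
     (\<forall>X Y f. f \<in> hom C X Y \<longrightarrow> Cmp C f (Idt C X) = f \<and> Cmp C (Idt C Y) f = f)"

definition is_iso :: "('o, 'm) category \<Rightarrow> 'm \<Rightarrow> 'o \<Rightarrow> 'o \<Rightarrow> bool" where
  "is_iso C f X Y \<longleftrightarrow> f \<in> hom C X Y \<and>
     (\<exists>g \<in> hom C Y X. Cmp C g f = Idt C X \<and> Cmp C f g = Idt C Y)"

definition is_functor ::
  "('o1, 'm1) category \<Rightarrow> ('o2, 'm2) category \<Rightarrow> ('o1 \<Rightarrow> 'o2) \<Rightarrow> ('m1 \<Rightarrow> 'm2) \<Rightarrow> bool" where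
  "is_functor C1 C2 Fo Fm \<longleftrightarrow>
     is_category C1 \<and> is_category C2 \<and>
     (\<forall>X \<in> Obj C1. Fo X \<in> Obj C2) \<and>
     (\<forall>X Y f. f \<in> hom C1 X Y \<longrightarrow> Fm f \<in> hom C2 (Fo X) (Fo Y)) \<and>
     (\<forall>X Y Z f g. f \<in> hom C1 X Y \<and> g \<in> hom C1 Y Z \<longrightarrow>
        Fm (Cmp C1 g f) = Cmp C2 (Fm g) (Fm f)) \<and>
     (\<forall>X \<in> Obj C1. Fm (Idt C1 X) = Idt C2 (Fo X))"

definition fully_faithful ::
  "('o1, 'm1) category \<Rightarrow> ('o2, 'm2) category \<Rightarrow> ('o1 \<Rightarrow> 'o2) \<Rightarrow> ('m1 \<Rightarrow> 'm2) \<Rightarrow> bool" where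
  "fully_faithful C1 C2 Fo Fm \<longleftrightarrow>
     (\<forall>X \<in> Obj C1. \<forall>Y \<in> Obj C1. bij_betw Fm (hom C1 X Y) (hom C2 (Fo X) (Fo Y)))"

definition is_coproduct ::
  "('o, 'm) category \<Rightarrow> 'i set \<Rightarrow> ('i \<Rightarrow> 'o) \<Rightarrow> ('i \<Rightarrow> 'm) \<Rightarrow> 'o \<Rightarrow> bool" where
  "is_coproduct C I Z \<iota> U \<longleftrightarrow>
     U \<in> Obj C \<and>
     (\<forall>i \<in> I. Z i \<in> Obj C \<and> \<iota> i \<in> hom C (Z i) U) \<and>
     (\<forall>T \<in> Obj C. \<forall>g. (\<forall>i \<in> I. g i \<in> hom C (Z i) T) \<longrightarrow>
        (\<exists>!h. h \<in> hom C U T \<and> (\<forall>i \<in> I. Cmp C h (\<iota> i) = g i)))"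

definition is_initial :: "('o, 'm) category \<Rightarrow> 'o \<Rightarrow> bool" where
  "is_initial C e \<longleftrightarrow> e \<in> Obj C \<and> (\<forall>T \<in> Obj C. \<exists>!h. h \<in> hom C e T)"

definition is_pullback ::
  "('o, 'm) category \<Rightarrow> 'm \<Rightarrow> 'm \<Rightarrow> 'o \<Rightarrow> 'm \<Rightarrow> 'm \<Rightarrow> bool" where
  "is_pullback C f g P p q \<longleftrightarrow>
     f \<in> Arr C \<and> g \<in> Arr C \<and> Cod C f = Cod C g \<and>
     p \<in> hom C P (Dom C f) \<and> q \<in> hom C P (Dom C g) \<and> Cmp C f p = Cmp C g q \<and>
     (\<forall>T \<in> Obj C. \<forall>u v. u \<in> hom C T (Dom C f) \<and> v \<in> hom C T (Dom C g) \<and>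
        Cmp C f u = Cmp C g v \<longrightarrow>
        (\<exists>!h. h \<in> hom C T P \<and> Cmp C p h = u \<and> Cmp C q h = v))"

definition inverts_coproducts ::
  "'i itself \<Rightarrow> ('o1, 'm1) category \<Rightarrow> ('o2, 'm2) category \<Rightarrow> ('o1 \<Rightarrow> 'o2) \<Rightarrow> ('m1 \<Rightarrow> 'm2) \<Rightarrow> bool" where
  "inverts_coproducts (_ :: 'i itself) C1 C2 Fo Fm \<longleftrightarrow>
     fully_faithful C1 C2 Fo Fm \<and>
     (\<forall>X \<in> Obj C1. \<forall>(I :: 'i set) Z \<iota>. is_coproduct C2 I Z \<iota> (Fo X) \<longrightarrow>
        (\<exists>Xs \<phi>. \<forall>i \<in> I. Xs i \<in> Obj C1 \<and> is_iso C2 (\<phi> i) (Fo (Xs i)) (Z i)))"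

text \<open>Extensive category (coproducts indexed by subsets of the type 'i;
  disjointness is for binary coproducts, indexed by bool).\<close>

definition extensive_cat :: "'i itself \<Rightarrow> ('o, 'm) category \<Rightarrow> bool" where
  "extensive_cat (_ :: 'i itself) C \<longleftrightarrow>
     is_category C \<and>
     (\<exists>e. is_initial C e) \<and>
     (\<forall>X Y U (j :: bool \<Rightarrow> 'm) e a b.
        is_coproduct C UNIV (\<lambda>t. if t then X else Y) j U \<and> is_initial C e \<and>
        a \<in> hom C e X \<and> b \<in> hom C e Y \<longrightarrow> is_pullback C (j True) (j False) e a b) \<and>
     (\<forall>(I :: 'i set) Us \<iota> U X f.
        is_coproduct C I Us \<iota> U \<and> f \<in> hom C X U \<longrightarrow>
        (\<forall>i \<in> I. \<exists>P p q. is_pullback C f (\<iota> i) P p q) \<and>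
        (\<forall>P p q. (\<forall>i \<in> I. is_pullback C f (\<iota> i) (P i) (p i) (q i)) \<longrightarrow>
           is_coproduct C I P p X))"

definition is_presheaf :: "('o, 'm) category \<Rightarrow> ('o \<Rightarrow> 'v set) \<Rightarrow> ('m \<Rightarrow> 'v \<Rightarrow> 'v) \<Rightarrow> bool" where
  "is_presheaf C Fp res \<longleftrightarrow>
     (\<forall>X Y f. f \<in> hom C X Y \<longrightarrow> res f \<in> Fp Y \<rightarrow> Fp X) \<and>
     (\<forall>X \<in> Obj C. \<forall>s \<in> Fp X. res (Idt C X) s = s) \<and>
     (\<forall>X Y Z f g s. f \<in> hom C X Y \<and> g \<in> hom C Y Z \<and> s \<in> Fp Z \<longrightarrow>
        res (Cmp C g f) s = res f (res g s))"

definition extensive_presheaf ::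
  "'i itself \<Rightarrow> ('o, 'm) category \<Rightarrow> ('o \<Rightarrow> 'v set) \<Rightarrow> ('m \<Rightarrow> 'v \<Rightarrow> 'v) \<Rightarrow> bool" where
  "extensive_presheaf (_ :: 'i itself) C Fp res \<longleftrightarrow>
     is_presheaf C Fp res \<and>
     (\<forall>(I :: 'i set) Xs \<iota> X. is_coproduct C I Xs \<iota> X \<longrightarrow>
        bij_betw (\<lambda>s. \<lambda>i \<in> I. res (\<iota> i) s) (Fp X) (\<Pi>\<^sub>E i \<in> I. Fp (Xs i)))"

definition comma_objs ::
  "('o1, 'm1) category \<Rightarrow> ('o2, 'm2) category \<Rightarrow> ('o1 \<Rightarrow> 'o2) \<Rightarrow> 'o2 \<Rightarrow> ('o1 \<times> 'm2) set" where
  "comma_objs C1 C2 Fo Y = {(X, \<psi>). X \<in> Obj C1 \<and> \<psi> \<in> hom C2 (Fo X) Y}"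

definition ran_obj ::
  "('o1, 'm1) category \<Rightarrow> ('o2, 'm2) category \<Rightarrow> ('o1 \<Rightarrow> 'o2) \<Rightarrow> ('m1 \<Rightarrow> 'm2) \<Rightarrow>
   ('o1 \<Rightarrow> 'v set) \<Rightarrow> ('m1 \<Rightarrow> 'v \<Rightarrow> 'v) \<Rightarrow> 'o2 \<Rightarrow> ('o1 \<times> 'm2 \<Rightarrow> 'v) set" where
  "ran_obj C1 C2 Fo Fm Fp res Y =
     {s \<in> extensional (comma_objs C1 C2 Fo Y).
        (\<forall>(X, \<psi>) \<in> comma_objs C1 C2 Fo Y. s (X, \<psi>) \<in> Fp X) \<and>
        (\<forall>X1 \<psi>1 X2 \<psi>2 f. (X1, \<psi>1) \<in> comma_objs C1 C2 Fo Y \<and> (X2, \<psi>2) \<in> comma_objs C1 C2 Fo Y \<and>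
           f \<in> hom C1 X1 X2 \<and> Cmp C2 \<psi>2 (Fm f) = \<psi>1 \<longrightarrow>
           res f (s (X2, \<psi>2)) = s (X1, \<psi>1))}"

definition ran_res ::
  "('o1, 'm1) category \<Rightarrow> ('o2, 'm2) category \<Rightarrow> ('o1 \<Rightarrow> 'o2) \<Rightarrow>
   'm2 \<Rightarrow> ('o1 \<times> 'm2 \<Rightarrow> 'v) \<Rightarrow> ('o1 \<times> 'm2 \<Rightarrow> 'v)" where
  "ran_res C1 C2 Fo g s = (\<lambda>(X, \<phi>) \<in> comma_objs C1 C2 Fo (Dom C2 g). s (X, Cmp C2 g \<phi>))"

end

theory Submission
  imports Defs
begin



lemma hom_D: "f \<in> hom C X Y \<Longrightarrow> f \<in> Arr C \<and> Dom C f = X \<and> Cod C f = Y"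
  by (simp add: hom_def)

lemma cat_comp: "is_category C \<Longrightarrow> f \<in> hom C X Y \<Longrightarrow> g \<in> hom C Y Z \<Longrightarrow> Cmp C g f \<in> hom C X Z"
  unfolding is_category_def by blast
lemma cat_assoc: "is_category C \<Longrightarrow> f \<in> hom C W X \<Longrightarrow> g \<in> hom C X Y \<Longrightarrow> h \<in> hom C Y Z \<Longrightarrow>
   Cmp C h (Cmp C g f) = Cmp C (Cmp C h g) f"
  unfolding is_category_def by blast
lemma cat_idl: "is_category C \<Longrightarrow> f \<in> hom C X Y \<Longrightarrow> Cmp C (Idt C Y) f = f"
  unfolding is_category_def by blast
lemma cat_idr: "is_category C \<Longrightarrow> f \<in> hom C X Y \<Longrightarrow> Cmp C f (Idt C X) = f"
  unfolding is_category_def by blast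
lemma cat_id: "is_category C \<Longrightarrow> X \<in> Obj C \<Longrightarrow> Idt C X \<in> hom C X X"
  unfolding is_category_def by blast
lemma cat_objs: "is_category C \<Longrightarrow> f \<in> hom C X Y \<Longrightarrow> X \<in> Obj C \<and> Y \<in> Obj C"
  unfolding is_category_def hom_def by blast

lemma cop_D: "is_coproduct C I Z \<iota> U \<Longrightarrow> U \<in> Obj C \<and> (\<forall>i \<in> I. Z i \<in> Obj C \<and> \<iota> i \<in> hom C (Z i) U)"
  unfolding is_coproduct_def by blast

lemma cop_ex1: "is_coproduct C I Z \<iota> U \<Longrightarrow> T \<in> Obj C \<Longrightarrow> (\<forall>i \<in> I. g i \<in> hom C (Z i) T) \<Longrightarrow>
   \<exists>!h. h \<in> hom C U T \<and> (\<forall>i \<in> I. Cmp C h (\<iota> i) = g i)"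
proof -
  assume a: "is_coproduct C I Z \<iota> U" "T \<in> Obj C" "\<forall>i \<in> I. g i \<in> hom C (Z i) T"
  from a(1) have u: "\<forall>T\<in>Obj C. \<forall>g. (\<forall>i \<in> I. g i \<in> hom C (Z i) T) \<longrightarrow>
        (\<exists>!h. h \<in> hom C U T \<and> (\<forall>i \<in> I. Cmp C h (\<iota> i) = g i))"
    unfolding is_coproduct_def by blast
  have v: "\<forall>g. (\<forall>i \<in> I. g i \<in> hom C (Z i) T) \<longrightarrow>
        (\<exists>!h. h \<in> hom C U T \<and> (\<forall>i \<in> I. Cmp C h (\<iota> i) = g i))" using u a(2) by blast
  show ?thesis by (rule mp[OF spec[OF v, of g] a(3)])
qed

lemma cop_univ: "is_coproduct C I Z \<iota> U \<Longrightarrow> T \<in> Obj C \<Longrightarrow> (\<And>i. i \<in> I \<Longrightarrow> g i \<in> hom C (Z i) T) \<Longrightarrow>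
   \<exists>h \<in> hom C U T. \<forall>i \<in> I. Cmp C h (\<iota> i) = g i"
  using cop_ex1[of C I Z \<iota> U T g] by blast

lemma cop_uniq: "is_category C \<Longrightarrow> is_coproduct C I Z \<iota> U \<Longrightarrow> h1 \<in> hom C U T \<Longrightarrow> h2 \<in> hom C U T \<Longrightarrow>
   (\<And>i. i \<in> I \<Longrightarrow> Cmp C h1 (\<iota> i) = Cmp C h2 (\<iota> i)) \<Longrightarrow> h1 = h2"
proof -
  assume c: "is_category C" and cp: "is_coproduct C I Z \<iota> U" and h: "h1 \<in> hom C U T" "h2 \<in> hom C U T"
    and eq: "(\<And>i. i \<in> I \<Longrightarrow> Cmp C h1 (\<iota> i) = Cmp C h2 (\<iota> i))"
  have T: "T \<in> Obj C" using cat_objs[OF c h(1)] by blast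
  have g: "\<forall>i \<in> I. Cmp C h1 (\<iota> i) \<in> hom C (Z i) T" using cop_D[OF cp] cat_comp[OF c] h by blast
  have "\<exists>!h. h \<in> hom C U T \<and> (\<forall>i \<in> I. Cmp C h (\<iota> i) = Cmp C h1 (\<iota> i))"
    by (rule cop_ex1[OF cp T g])
  then show "h1 = h2" using h eq by metis
qed

lemma pb_D: "is_pullback C f g P p q \<Longrightarrow> f \<in> hom C A Y \<Longrightarrow> g \<in> hom C B Y \<Longrightarrow>
   p \<in> hom C P A \<and> q \<in> hom C P B \<and> Cmp C f p = Cmp C g q \<and>
   (\<forall>T \<in> Obj C. \<forall>u v. u \<in> hom C T A \<and> v \<in> hom C T B \<and> Cmp C f u = Cmp C g v \<longrightarrow>
        (\<exists>h \<in> hom C T P. Cmp C p h = u \<and> Cmp C q h = v))"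
  unfolding is_pullback_def by (metis hom_D)




locale kan =
  fixes ty :: "'i itself" and C1 :: "('o1, 'm1) category" and C2 :: "('o2, 'm2) category"
    and Fo :: "'o1 \<Rightarrow> 'o2" and Fm :: "'m1 \<Rightarrow> 'm2"
    and Fp :: "'o1 \<Rightarrow> 'v set" and res :: "'m1 \<Rightarrow> 'v \<Rightarrow> 'v"
  assumes fnc: "is_functor C1 C2 Fo Fm"
    and invc: "inverts_coproducts ty C1 C2 Fo Fm"
    and ext: "extensive_cat ty C2"
    and pre: "extensive_presheaf ty C1 Fp res"
begin

lemma c1: "is_category C1" using fnc unfolding is_functor_def by blast
lemma c2: "is_category C2" using fnc unfolding is_functor_def by blast

lemma F_obj: "X \<in> Obj C1 \<Longrightarrow> Fo X \<in> Obj C2" using fnc unfolding is_functor_def by blast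
lemma F_hom: "f \<in> hom C1 X Y \<Longrightarrow> Fm f \<in> hom C2 (Fo X) (Fo Y)" using fnc unfolding is_functor_def by blast
lemma F_comp: "f \<in> hom C1 X Y \<Longrightarrow> g \<in> hom C1 Y Z \<Longrightarrow> Fm (Cmp C1 g f) = Cmp C2 (Fm g) (Fm f)"
  using fnc unfolding is_functor_def by blast
lemma F_id: "X \<in> Obj C1 \<Longrightarrow> Fm (Idt C1 X) = Idt C2 (Fo X)" using fnc unfolding is_functor_def by blast

lemma ff: "fully_faithful C1 C2 Fo Fm" using invc unfolding inverts_coproducts_def by blast

lemma full: "X \<in> Obj C1 \<Longrightarrow> Y \<in> Obj C1 \<Longrightarrow> h \<in> hom C2 (Fo X) (Fo Y) \<Longrightarrow> \<exists>f \<in> hom C1 X Y. Fm f = h"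
proof -
  assume a: "X \<in> Obj C1" "Y \<in> Obj C1" "h \<in> hom C2 (Fo X) (Fo Y)"
  then have "h \<in> Fm ` hom C1 X Y" using ff unfolding fully_faithful_def bij_betw_def by blast
  then show ?thesis by blast
qed

lemma faith: "f \<in> hom C1 X Y \<Longrightarrow> g \<in> hom C1 X Y \<Longrightarrow> Fm f = Fm g \<Longrightarrow> f = g"
  using ff cat_objs[OF c1] unfolding fully_faithful_def bij_betw_def inj_on_def by metis

lemma psh: "is_presheaf C1 Fp res" using pre unfolding extensive_presheaf_def by blast
lemma res_hom: "f \<in> hom C1 X Y \<Longrightarrow> s \<in> Fp Y \<Longrightarrow> res f s \<in> Fp X"
  using psh unfolding is_presheaf_def by blast
lemma res_id: "X \<in> Obj C1 \<Longrightarrow> s \<in> Fp X \<Longrightarrow> res (Idt C1 X) s = s"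
  using psh unfolding is_presheaf_def by blast
lemma res_comp: "f \<in> hom C1 X Y \<Longrightarrow> g \<in> hom C1 Y Z \<Longrightarrow> s \<in> Fp Z \<Longrightarrow> res (Cmp C1 g f) s = res f (res g s)"
  using psh unfolding is_presheaf_def by blast

lemma pre_bij: fixes I :: "'i set" shows "is_coproduct C1 I Xs e X \<Longrightarrow>
   bij_betw (\<lambda>s. \<lambda>i \<in> I. res (e i) s) (Fp X) (\<Pi>\<^sub>E i \<in> I. Fp (Xs i))"
  using pre unfolding extensive_presheaf_def by blast

lemma ext4: fixes I :: "'i set" shows "is_coproduct C2 I Us \<iota> U \<Longrightarrow> f \<in> hom C2 X U \<Longrightarrow>
        (\<forall>i \<in> I. \<exists>P p q. is_pullback C2 f (\<iota> i) P p q) \<and>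
        (\<forall>P p q. (\<forall>i \<in> I. is_pullback C2 f (\<iota> i) (P i) (p i) (q i)) \<longrightarrow>
           is_coproduct C2 I P p X)"
  using ext unfolding extensive_cat_def by blast

lemma invc2: fixes I :: "'i set" shows "X \<in> Obj C1 \<Longrightarrow> is_coproduct C2 I Z \<iota> (Fo X) \<Longrightarrow>
        (\<exists>Xs \<phi>. \<forall>i \<in> I. Xs i \<in> Obj C1 \<and> is_iso C2 (\<phi> i) (Fo (Xs i)) (Z i))"
  using invc unfolding inverts_coproducts_def by blast

definition decomp :: "'i set \<Rightarrow> ('i \<Rightarrow> 'o2) \<Rightarrow> ('i \<Rightarrow> 'm2) \<Rightarrow> 'o1 \<Rightarrow> 'm2 \<Rightarrow> ('i \<Rightarrow> 'o1) \<Rightarrow> ('i \<Rightarrow> 'm1) \<Rightarrow> ('i \<Rightarrow> 'm2) \<Rightarrow> bool" where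
  "decomp I Ys \<iota> X \<psi> Xs e r \<longleftrightarrow> is_coproduct C1 I Xs e X \<and>
     (\<forall>i\<in>I. r i \<in> hom C2 (Fo (Xs i)) (Ys i) \<and> Cmp C2 \<psi> (Fm (e i)) = Cmp C2 (\<iota> i) (r i)) \<and>
     (\<forall>i\<in>I. \<forall>A \<rho> g. A \<in> Obj C1 \<and> \<rho> \<in> hom C2 (Fo A) (Ys i) \<and> g \<in> hom C1 A X \<and>
         Cmp C2 \<psi> (Fm g) = Cmp C2 (\<iota> i) \<rho> \<longrightarrow>
        (\<exists>k \<in> hom C1 A (Xs i). g = Cmp C1 (e i) k \<and> Cmp C2 (r i) (Fm k) = \<rho>))"

lemma decomp_exists:
  fixes I :: "'i set"
  assumes cp: "is_coproduct C2 I Ys \<iota> Y" and X: "X \<in> Obj C1" and psi: "\<psi> \<in> hom C2 (Fo X) Y"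
  shows "\<exists>Xs e r. decomp I Ys \<iota> X \<psi> Xs e r"
proof -
  have "\<forall>i\<in>I. \<exists>P p q. is_pullback C2 \<psi> (\<iota> i) P p q" using ext4[OF cp psi] by blast
  then have "\<forall>i\<in>I. \<exists>t. is_pullback C2 \<psi> (\<iota> i) (fst t) (fst (snd t)) (snd (snd t))" by auto
  from bchoice[OF this] obtain T where T: "\<forall>i\<in>I. is_pullback C2 \<psi> (\<iota> i) (fst (T i)) (fst (snd (T i))) (snd (snd (T i)))" by blast
  define P where "P i = fst (T i)" for i
  define p where "p i = fst (snd (T i))" for i
  define q where "q i = snd (snd (T i))" for i
  have pb: "\<forall>i\<in>I. is_pullback C2 \<psi> (\<iota> i) (P i) (p i) (q i)" using T unfolding P_def p_def q_def by blast
  have cpP: "is_coproduct C2 I P p (Fo X)" using ext4[OF cp psi] pb by blast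
  obtain Xs \<phi> where iso: "\<forall>i\<in>I. Xs i \<in> Obj C1 \<and> is_iso C2 (\<phi> i) (Fo (Xs i)) (P i)"
    using invc2[OF X cpP] by blast
  have "\<forall>i\<in>I. \<exists>g. g \<in> hom C2 (P i) (Fo (Xs i)) \<and> Cmp C2 g (\<phi> i) = Idt C2 (Fo (Xs i))
      \<and> Cmp C2 (\<phi> i) g = Idt C2 (P i)"
    using iso unfolding is_iso_def by blast
  from bchoice[OF this] obtain \<phi>' where inv': "\<forall>i\<in>I. \<phi>' i \<in> hom C2 (P i) (Fo (Xs i)) \<and> Cmp C2 (\<phi>' i) (\<phi> i) = Idt C2 (Fo (Xs i))
      \<and> Cmp C2 (\<phi> i) (\<phi>' i) = Idt C2 (P i)" by blast
  have phi: "\<forall>i\<in>I. \<phi> i \<in> hom C2 (Fo (Xs i)) (P i)" using iso unfolding is_iso_def by blast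
  have iota: "\<forall>i\<in>I. \<iota> i \<in> hom C2 (Ys i) Y" using cop_D[OF cp] by blast
  have pbD: "\<forall>i\<in>I. p i \<in> hom C2 (P i) (Fo X) \<and> q i \<in> hom C2 (P i) (Ys i) \<and> Cmp C2 \<psi> (p i) = Cmp C2 (\<iota> i) (q i) \<and>
   (\<forall>T \<in> Obj C2. \<forall>u v. u \<in> hom C2 T (Fo X) \<and> v \<in> hom C2 T (Ys i) \<and> Cmp C2 \<psi> u = Cmp C2 (\<iota> i) v \<longrightarrow>
        (\<exists>h \<in> hom C2 T (P i). Cmp C2 (p i) h = u \<and> Cmp C2 (q i) h = v))"
  proof
    fix i assume i: "i \<in> I"
    show "p i \<in> hom C2 (P i) (Fo X) \<and> q i \<in> hom C2 (P i) (Ys i) \<and> Cmp C2 \<psi> (p i) = Cmp C2 (\<iota> i) (q i) \<and>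
   (\<forall>T \<in> Obj C2. \<forall>u v. u \<in> hom C2 T (Fo X) \<and> v \<in> hom C2 T (Ys i) \<and> Cmp C2 \<psi> u = Cmp C2 (\<iota> i) v \<longrightarrow>
        (\<exists>h \<in> hom C2 T (P i). Cmp C2 (p i) h = u \<and> Cmp C2 (q i) h = v))"
      using pb_D[OF pb[rule_format, OF i] psi iota[rule_format, OF i]] .
  qed
  have "\<forall>i\<in>I. \<exists>f. f \<in> hom C1 (Xs i) X \<and> Fm f = Cmp C2 (p i) (\<phi> i)"
  proof
    fix i assume i: "i \<in> I"
    have "Cmp C2 (p i) (\<phi> i) \<in> hom C2 (Fo (Xs i)) (Fo X)"
      using cat_comp[OF c2] phi pbD i by blast
    then show "\<exists>f. f \<in> hom C1 (Xs i) X \<and> Fm f = Cmp C2 (p i) (\<phi> i)" using full iso X i by blast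
  qed
  from bchoice[OF this] obtain e where e: "\<forall>i\<in>I. e i \<in> hom C1 (Xs i) X \<and> Fm (e i) = Cmp C2 (p i) (\<phi> i)" by blast
  define r where "r i = Cmp C2 (q i) (\<phi> i)" for i
  have A: "is_coproduct C1 I Xs e X"
    unfolding is_coproduct_def
  proof (intro conjI ballI allI impI)
    show "X \<in> Obj C1" by (rule X)
    fix i assume "i \<in> I" then show "Xs i \<in> Obj C1" "e i \<in> hom C1 (Xs i) X" using iso e by blast+
  next
    fix T g assume T: "T \<in> Obj C1" and g: "\<forall>i\<in>I. g i \<in> hom C1 (Xs i) T"
    define G where "G i = Cmp C2 (Fm (g i)) (\<phi>' i)" for i
    have G: "\<forall>i\<in>I. G i \<in> hom C2 (P i) (Fo T)"
      unfolding G_def using cat_comp[OF c2] inv' F_hom g by blast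
    have key: "Cmp C2 (Fm h') (p i) = G i" if h': "h' \<in> hom C1 X T" "\<forall>i\<in>I. Cmp C1 h' (e i) = g i"
      and i: "i \<in> I" for h' i
    proof -
      have ph: "\<phi> i \<in> hom C2 (Fo (Xs i)) (P i)" using phi i by blast
      have ph': "\<phi>' i \<in> hom C2 (P i) (Fo (Xs i))" and inv2: "Cmp C2 (\<phi> i) (\<phi>' i) = Idt C2 (P i)"
        using inv' i by blast+
      have pi: "p i \<in> hom C2 (P i) (Fo X)" using pbD i by blast
      have Fh: "Fm h' \<in> hom C2 (Fo X) (Fo T)" using F_hom h' by blast
      have ei: "e i \<in> hom C1 (Xs i) X" using e i by blast
      have "Cmp C2 (Fm h') (p i) = Cmp C2 (Fm h') (Cmp C2 (p i) (Cmp C2 (\<phi> i) (\<phi>' i)))"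
        using inv2 cat_idr[OF c2 pi] by simp
      also have "\<dots> = Cmp C2 (Fm h') (Cmp C2 (Cmp C2 (p i) (\<phi> i)) (\<phi>' i))"
        using cat_assoc[OF c2 ph' ph pi] by simp
      also have "\<dots> = Cmp C2 (Cmp C2 (Fm h') (Fm (e i))) (\<phi>' i)"
        using cat_assoc[OF c2 ph' _ Fh, of "Fm (e i)"] F_hom[OF ei] e i by simp
      also have "\<dots> = Cmp C2 (Fm (g i)) (\<phi>' i)" using F_comp[OF ei h'(1)] h'(2) i by simp
      finally show ?thesis unfolding G_def .
    qed
    obtain H where H: "H \<in> hom C2 (Fo X) (Fo T)" "\<forall>i\<in>I. Cmp C2 H (p i) = G i"
      using cop_univ[OF cpP F_obj[OF T], of G] G by blast
    obtain h where h: "h \<in> hom C1 X T" "Fm h = H" using full[OF X T H(1)] by blast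
    have hc: "\<forall>i\<in>I. Cmp C1 h (e i) = g i"
    proof
      fix i assume i: "i \<in> I"
      have ph: "\<phi> i \<in> hom C2 (Fo (Xs i)) (P i)" using phi i by blast
      have ph': "\<phi>' i \<in> hom C2 (P i) (Fo (Xs i))" and inv1: "Cmp C2 (\<phi>' i) (\<phi> i) = Idt C2 (Fo (Xs i))"
        using inv' i by blast+
      have pi: "p i \<in> hom C2 (P i) (Fo X)" using pbD i by blast
      have ei: "e i \<in> hom C1 (Xs i) X" using e i by blast
      have gi: "g i \<in> hom C1 (Xs i) T" using g i by blast
      have Fgi: "Fm (g i) \<in> hom C2 (Fo (Xs i)) (Fo T)" using F_hom[OF gi] .
      have "Fm (Cmp C1 h (e i)) = Cmp C2 H (Cmp C2 (p i) (\<phi> i))" using F_comp[OF ei h(1)] h(2) e i by simp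
      also have "\<dots> = Cmp C2 (Cmp C2 H (p i)) (\<phi> i)" using cat_assoc[OF c2 ph pi H(1)] .
      also have "\<dots> = Cmp C2 (Cmp C2 (Fm (g i)) (\<phi>' i)) (\<phi> i)" using H(2) i G_def by simp
      also have "\<dots> = Fm (g i)" using cat_assoc[OF c2 ph ph' Fgi] inv1 cat_idr[OF c2 Fgi] by simp
      finally show "Cmp C1 h (e i) = g i" using faith[OF cat_comp[OF c1 ei h(1)] gi] by blast
    qed
    show "\<exists>!h. h \<in> hom C1 X T \<and> (\<forall>i\<in>I. Cmp C1 h (e i) = g i)"
    proof (rule ex1I[of _ h])
      show "h \<in> hom C1 X T \<and> (\<forall>i\<in>I. Cmp C1 h (e i) = g i)" using h hc by blast
    next
      fix h1 assume h1: "h1 \<in> hom C1 X T \<and> (\<forall>i\<in>I. Cmp C1 h1 (e i) = g i)"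
      have "Fm h1 = Fm h"
        by (rule cop_uniq[OF c2 cpP F_hom F_hom]) (use h1 h hc key in auto)
      then show "h1 = h" using faith h1 h by blast
    qed
  qed
  have B: "\<forall>i\<in>I. r i \<in> hom C2 (Fo (Xs i)) (Ys i) \<and> Cmp C2 \<psi> (Fm (e i)) = Cmp C2 (\<iota> i) (r i)"
  proof
    fix i assume i: "i \<in> I"
    have ph: "\<phi> i \<in> hom C2 (Fo (Xs i)) (P i)" using phi i by blast
    have pi: "p i \<in> hom C2 (P i) (Fo X)" and qi: "q i \<in> hom C2 (P i) (Ys i)"
      and sq: "Cmp C2 \<psi> (p i) = Cmp C2 (\<iota> i) (q i)" using pbD i by blast+
    have io: "\<iota> i \<in> hom C2 (Ys i) Y" using iota i by blast
    have "Cmp C2 \<psi> (Fm (e i)) = Cmp C2 \<psi> (Cmp C2 (p i) (\<phi> i))" using e i by simp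
    also have "\<dots> = Cmp C2 (Cmp C2 \<psi> (p i)) (\<phi> i)" using cat_assoc[OF c2 ph pi psi] .
    also have "\<dots> = Cmp C2 (Cmp C2 (\<iota> i) (q i)) (\<phi> i)" using sq by simp
    also have "\<dots> = Cmp C2 (\<iota> i) (r i)" unfolding r_def using cat_assoc[OF c2 ph qi io] by simp
    finally show "r i \<in> hom C2 (Fo (Xs i)) (Ys i) \<and> Cmp C2 \<psi> (Fm (e i)) = Cmp C2 (\<iota> i) (r i)"
      unfolding r_def using cat_comp[OF c2 ph qi] by simp
  qed
  have C: "\<forall>i\<in>I. \<forall>A \<rho> g. A \<in> Obj C1 \<and> \<rho> \<in> hom C2 (Fo A) (Ys i) \<and> g \<in> hom C1 A X \<and>
         Cmp C2 \<psi> (Fm g) = Cmp C2 (\<iota> i) \<rho> \<longrightarrow>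
        (\<exists>k \<in> hom C1 A (Xs i). g = Cmp C1 (e i) k \<and> Cmp C2 (r i) (Fm k) = \<rho>)"
  proof (intro ballI allI impI)
    fix i A \<rho> g assume i: "i \<in> I" and H: "A \<in> Obj C1 \<and> \<rho> \<in> hom C2 (Fo A) (Ys i) \<and> g \<in> hom C1 A X \<and>
         Cmp C2 \<psi> (Fm g) = Cmp C2 (\<iota> i) \<rho>"
    have ph: "\<phi> i \<in> hom C2 (Fo (Xs i)) (P i)" using phi i by blast
    have ph': "\<phi>' i \<in> hom C2 (P i) (Fo (Xs i))" and inv2: "Cmp C2 (\<phi> i) (\<phi>' i) = Idt C2 (P i)"
      using inv' i by blast+
    have pi: "p i \<in> hom C2 (P i) (Fo X)" and qi: "q i \<in> hom C2 (P i) (Ys i)" using pbD i by blast+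
    have Fg: "Fm g \<in> hom C2 (Fo A) (Fo X)" using F_hom H by blast
    have FA: "Fo A \<in> Obj C2" using F_obj H by blast
    obtain h where h: "h \<in> hom C2 (Fo A) (P i)" "Cmp C2 (p i) h = Fm g" "Cmp C2 (q i) h = \<rho>"
      using pbD i FA Fg H by blast
    have ph'h: "Cmp C2 (\<phi>' i) h \<in> hom C2 (Fo A) (Fo (Xs i))" using cat_comp[OF c2 h(1) ph'] .
    obtain k where k: "k \<in> hom C1 A (Xs i)" "Fm k = Cmp C2 (\<phi>' i) h"
      using full[OF _ _ ph'h] H iso i by blast
    have ek: "Cmp C1 (e i) k \<in> hom C1 A X" using cat_comp[OF c1 k(1)] e i by blast
    have pph: "Cmp C2 (\<phi> i) (Cmp C2 (\<phi>' i) h) = h"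
      using cat_assoc[OF c2 h(1) ph' ph] inv2 cat_idl[OF c2 h(1)] by simp
    have "Fm (Cmp C1 (e i) k) = Cmp C2 (Fm (e i)) (Fm k)" using F_comp[OF k(1)] e i by blast
    also have "\<dots> = Cmp C2 (Cmp C2 (p i) (\<phi> i)) (Cmp C2 (\<phi>' i) h)" using e i k by simp
    also have "\<dots> = Cmp C2 (p i) (Cmp C2 (\<phi> i) (Cmp C2 (\<phi>' i) h))" using cat_assoc[OF c2 ph'h ph pi] by simp
    also have "\<dots> = Fm g" using pph h by simp
    finally have "g = Cmp C1 (e i) k" using faith[OF ek] H by metis
    moreover have "Cmp C2 (r i) (Fm k) = \<rho>"
    proof -
      have "Cmp C2 (r i) (Fm k) = Cmp C2 (Cmp C2 (q i) (\<phi> i)) (Cmp C2 (\<phi>' i) h)" unfolding r_def using k by simp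
      also have "\<dots> = Cmp C2 (q i) (Cmp C2 (\<phi> i) (Cmp C2 (\<phi>' i) h))" using cat_assoc[OF c2 ph'h ph qi] by simp
      also have "\<dots> = \<rho>" using pph h by simp
      finally show ?thesis .
    qed
    ultimately show "\<exists>k \<in> hom C1 A (Xs i). g = Cmp C1 (e i) k \<and> Cmp C2 (r i) (Fm k) = \<rho>" using k by blast
  qed
  show ?thesis unfolding decomp_def using A B C by blast
qed

end



context kan begin

abbreviation "R \<equiv> ran_obj C1 C2 Fo Fm Fp res"
abbreviation "CO \<equiv> comma_objs C1 C2 Fo"
abbreviation "rr \<equiv> ran_res C1 C2 Fo"

lemma CO_iff: "(X, \<psi>) \<in> CO Y \<longleftrightarrow> X \<in> Obj C1 \<and> \<psi> \<in> hom C2 (Fo X) Y"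
  by (simp add: comma_objs_def)

lemma R_val: "s \<in> R Y \<Longrightarrow> X \<in> Obj C1 \<Longrightarrow> \<psi> \<in> hom C2 (Fo X) Y \<Longrightarrow> s (X, \<psi>) \<in> Fp X"
  unfolding ran_obj_def comma_objs_def by blast

lemma R_compat: "s \<in> R Y \<Longrightarrow> X1 \<in> Obj C1 \<Longrightarrow> \<psi>1 \<in> hom C2 (Fo X1) Y \<Longrightarrow> X2 \<in> Obj C1 \<Longrightarrow>
   \<psi>2 \<in> hom C2 (Fo X2) Y \<Longrightarrow> f \<in> hom C1 X1 X2 \<Longrightarrow> Cmp C2 \<psi>2 (Fm f) = \<psi>1 \<Longrightarrow>
   res f (s (X2, \<psi>2)) = s (X1, \<psi>1)"
  unfolding ran_obj_def comma_objs_def by blast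

lemma R_ext: "s \<in> R Y \<Longrightarrow> x \<notin> CO Y \<Longrightarrow> s x = undefined"
  unfolding ran_obj_def extensional_def by blast

lemma R_I: "s \<in> extensional (CO Y) \<Longrightarrow> (\<And>X \<psi>. X \<in> Obj C1 \<Longrightarrow> \<psi> \<in> hom C2 (Fo X) Y \<Longrightarrow> s (X, \<psi>) \<in> Fp X) \<Longrightarrow>
   (\<And>X1 \<psi>1 X2 \<psi>2 f. X1 \<in> Obj C1 \<Longrightarrow> \<psi>1 \<in> hom C2 (Fo X1) Y \<Longrightarrow> X2 \<in> Obj C1 \<Longrightarrow>
   \<psi>2 \<in> hom C2 (Fo X2) Y \<Longrightarrow> f \<in> hom C1 X1 X2 \<Longrightarrow> Cmp C2 \<psi>2 (Fm f) = \<psi>1 \<Longrightarrow>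
   res f (s (X2, \<psi>2)) = s (X1, \<psi>1)) \<Longrightarrow> s \<in> R Y"
  unfolding ran_obj_def comma_objs_def by blast

lemma rr_apply: "g \<in> hom C2 Y1 Y2 \<Longrightarrow> X \<in> Obj C1 \<Longrightarrow> \<phi> \<in> hom C2 (Fo X) Y1 \<Longrightarrow>
   rr g s (X, \<phi>) = s (X, Cmp C2 g \<phi>)"
  unfolding ran_res_def comma_objs_def by (simp add: hom_def)

lemma rr_out: "g \<in> hom C2 Y1 Y2 \<Longrightarrow> x \<notin> CO Y1 \<Longrightarrow> rr g s x = undefined"
  unfolding ran_res_def by (simp add: hom_def)

lemma rr_hom: assumes g: "g \<in> hom C2 Y1 Y2" and s: "s \<in> R Y2" shows "rr g s \<in> R Y1"
proof (rule R_I)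
  show "rr g s \<in> extensional (CO Y1)" using rr_out[OF g] by (auto simp: extensional_def)
next
  fix X \<psi> assume X: "X \<in> Obj C1" and p: "\<psi> \<in> hom C2 (Fo X) Y1"
  show "rr g s (X, \<psi>) \<in> Fp X" using rr_apply[OF g X p, of s] R_val[OF s X cat_comp[OF c2 p g]] by simp
next
  fix X1 \<psi>1 X2 \<psi>2 f assume a: "X1 \<in> Obj C1" "\<psi>1 \<in> hom C2 (Fo X1) Y1" "X2 \<in> Obj C1"
   "\<psi>2 \<in> hom C2 (Fo X2) Y1" "f \<in> hom C1 X1 X2" "Cmp C2 \<psi>2 (Fm f) = \<psi>1"
  have "Cmp C2 (Cmp C2 g \<psi>2) (Fm f) = Cmp C2 g \<psi>1"
    using cat_assoc[OF c2 F_hom[OF a(5)] a(4) g] a(6) by simp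
  then show "res f (rr g s (X2, \<psi>2)) = rr g s (X1, \<psi>1)"
    using rr_apply[OF g a(3) a(4), of s] rr_apply[OF g a(1) a(2), of s] R_compat[OF s a(1) cat_comp[OF c2 a(2) g] a(3) cat_comp[OF c2 a(4) g] a(5)] by simp
qed

lemma ran_presheaf: "is_presheaf C2 R rr"
  unfolding is_presheaf_def
proof (intro conjI allI impI ballI)
  fix X Y f assume "f \<in> hom C2 X Y" then show "rr f \<in> R Y \<rightarrow> R X" using rr_hom by blast
next
  fix Y s assume Y: "Y \<in> Obj C2" and s: "s \<in> R Y"
  show "rr (Idt C2 Y) s = s"
  proof
    fix x show "rr (Idt C2 Y) s x = s x"
    proof (cases "x \<in> CO Y")
      case True
      then obtain X \<psi> where x: "x = (X, \<psi>)" "X \<in> Obj C1" "\<psi> \<in> hom C2 (Fo X) Y" using CO_iff by (cases x) auto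
      then show ?thesis using rr_apply[OF cat_id[OF c2 Y]] cat_idl[OF c2] by simp
    next
      case False
      then show ?thesis using rr_out[OF cat_id[OF c2 Y]] R_ext[OF s] by simp
    qed
  qed
next
  fix X Y Z f g s assume a: "f \<in> hom C2 X Y \<and> g \<in> hom C2 Y Z \<and> s \<in> R Z"
  show "rr (Cmp C2 g f) s = rr f (rr g s)"
  proof
    fix x show "rr (Cmp C2 g f) s x = rr f (rr g s) x"
    proof (cases "x \<in> CO X")
      case True
      then obtain A \<psi> where x: "x = (A, \<psi>)" "A \<in> Obj C1" "\<psi> \<in> hom C2 (Fo A) X" using CO_iff by (cases x) auto
      have f: "f \<in> hom C2 X Y" and g: "g \<in> hom C2 Y Z" using a by blast+
      show ?thesis using rr_apply[OF cat_comp[OF c2 f g] x(2) x(3), of s] rr_apply[OF f x(2) x(3), of "rr g s"]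
        rr_apply[OF g x(2) cat_comp[OF c2 x(3) f], of s] cat_assoc[OF c2 x(3) f g] x(1) by simp
    next
      case False
      have f: "f \<in> hom C2 X Y" and g: "g \<in> hom C2 Y Z" using a by blast+
      show ?thesis using rr_out[OF cat_comp[OF c2 f g] False, of s] rr_out[OF f False, of "rr g s"] by simp
    qed
  qed
qed

end



context kan begin

lemma dec_unique:
  fixes I :: "'i set"
  assumes d: "decomp I Ys \<iota> X \<psi> Xs e r" and u: "u \<in> Fp X" "u' \<in> Fp X"
    and eq: "\<forall>i\<in>I. res (e i) u = res (e i) u'"
  shows "u = u'"
proof -
  have cp: "is_coproduct C1 I Xs e X" using d unfolding decomp_def by blast
  have "(\<lambda>i\<in>I. res (e i) u) = (\<lambda>i\<in>I. res (e i) u')" using eq by (intro restrict_ext) blast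
  then show ?thesis using pre_bij[OF cp] u unfolding bij_betw_def inj_on_def by blast
qed

lemma dec_ex:
  fixes I :: "'i set"
  assumes d: "decomp I Ys \<iota> X \<psi> Xs e r" and t: "t \<in> (\<Pi>\<^sub>E i\<in>I. R (Ys i))"
  shows "\<exists>u \<in> Fp X. \<forall>i\<in>I. res (e i) u = t i (Xs i, r i)"
proof -
  have cp: "is_coproduct C1 I Xs e X" using d unfolding decomp_def by blast
  have "\<forall>i\<in>I. t i (Xs i, r i) \<in> Fp (Xs i)"
  proof
    fix i assume i: "i \<in> I"
    show "t i (Xs i, r i) \<in> Fp (Xs i)"
      using R_val[of "t i" "Ys i" "Xs i" "r i"] t i cop_D[OF cp] d unfolding decomp_def by blast
  qed
  then have "(\<lambda>i\<in>I. t i (Xs i, r i)) \<in> (\<Pi>\<^sub>E i\<in>I. Fp (Xs i))" by (simp add: restrict_PiE_iff)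
  then obtain u where u: "u \<in> Fp X" "(\<lambda>i\<in>I. res (e i) u) = (\<lambda>i\<in>I. t i (Xs i, r i))"
    using pre_bij[OF cp] unfolding bij_betw_def by (metis (no_types, lifting) imageE)
  have "\<forall>i\<in>I. res (e i) u = t i (Xs i, r i)"
  proof
    fix i assume "i \<in> I" then show "res (e i) u = t i (Xs i, r i)" using fun_cong[OF u(2), of i] by simp
  qed
  then show ?thesis using u(1) by blast
qed

lemma dec_L:
  fixes I :: "'i set"
  assumes d: "decomp I Ys \<iota> X \<psi> Xs e r" and t: "t \<in> (\<Pi>\<^sub>E i\<in>I. R (Ys i))"
    and u: "u \<in> Fp X" "\<forall>i\<in>I. res (e i) u = t i (Xs i, r i)"
    and i: "i \<in> I" and A: "A \<in> Obj C1" and rho: "\<rho> \<in> hom C2 (Fo A) (Ys i)" and g: "g \<in> hom C1 A X"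
    and sq: "Cmp C2 \<psi> (Fm g) = Cmp C2 (\<iota> i) \<rho>"
  shows "res g u = t i (A, \<rho>)"
proof -
  have cp: "is_coproduct C1 I Xs e X" using d unfolding decomp_def by blast
  obtain k where k: "k \<in> hom C1 A (Xs i)" "g = Cmp C1 (e i) k" "Cmp C2 (r i) (Fm k) = \<rho>"
    using d i A rho g sq unfolding decomp_def by blast
  have ei: "e i \<in> hom C1 (Xs i) X" and Xi: "Xs i \<in> Obj C1" using cop_D[OF cp] i by blast+
  have ri: "r i \<in> hom C2 (Fo (Xs i)) (Ys i)" using d i unfolding decomp_def by blast
  have ti: "t i \<in> R (Ys i)" using t i by blast
  have "res g u = res k (res (e i) u)" using res_comp[OF k(1) ei u(1)] k(2) by simp
  also have "\<dots> = res k (t i (Xs i, r i))" using u(2) i by simp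
  also have "\<dots> = t i (A, \<rho>)" using R_compat[OF ti A rho Xi ri k(1) k(3)] .
  finally show ?thesis .
qed

end



context kan begin

lemma ran_bij:
  fixes I :: "'i set"
  assumes cp: "is_coproduct C2 I Ys \<iota> Y"
  shows "bij_betw (\<lambda>s. \<lambda>i\<in>I. rr (\<iota> i) s) (R Y) (\<Pi>\<^sub>E i\<in>I. R (Ys i))"
proof -
  have iota: "\<forall>i\<in>I. \<iota> i \<in> hom C2 (Ys i) Y" using cop_D[OF cp] by blast
  have "\<forall>x. \<exists>d. fst x \<in> Obj C1 \<and> snd x \<in> hom C2 (Fo (fst x)) Y \<longrightarrow>
      decomp I Ys \<iota> (fst x) (snd x) (fst d) (fst (snd d)) (snd (snd d))"
    using decomp_exists[OF cp] by fastforce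
  from choice[OF this] obtain D where D: "\<forall>x. fst x \<in> Obj C1 \<and> snd x \<in> hom C2 (Fo (fst x)) Y \<longrightarrow>
      decomp I Ys \<iota> (fst x) (snd x) (fst (D x)) (fst (snd (D x))) (snd (snd (D x)))" by blast
  define DX where "DX X \<psi> = fst (D (X, \<psi>))" for X \<psi>
  define De where "De X \<psi> = fst (snd (D (X, \<psi>)))" for X \<psi>
  define Dr where "Dr X \<psi> = snd (snd (D (X, \<psi>)))" for X \<psi>
  have d: "decomp I Ys \<iota> X \<psi> (DX X \<psi>) (De X \<psi>) (Dr X \<psi>)" if "X \<in> Obj C1" "\<psi> \<in> hom C2 (Fo X) Y" for X \<psi>
    using D[rule_format, of "(X, \<psi>)"] that unfolding DX_def De_def Dr_def by simp
  have dD: "is_coproduct C1 I (DX X \<psi>) (De X \<psi>) X \<and>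
     (\<forall>i\<in>I. DX X \<psi> i \<in> Obj C1 \<and> De X \<psi> i \<in> hom C1 (DX X \<psi> i) X \<and>
       Dr X \<psi> i \<in> hom C2 (Fo (DX X \<psi> i)) (Ys i) \<and> Cmp C2 \<psi> (Fm (De X \<psi> i)) = Cmp C2 (\<iota> i) (Dr X \<psi> i))"
    if "X \<in> Obj C1" "\<psi> \<in> hom C2 (Fo X) Y" for X \<psi>
    using d[OF that] cop_D[of C1 I "DX X \<psi>" "De X \<psi>" X] unfolding decomp_def by blast
  have inj: "inj_on (\<lambda>s. \<lambda>i\<in>I. rr (\<iota> i) s) (R Y)"
  proof (rule inj_onI)
    fix s t assume s: "s \<in> R Y" and t: "t \<in> R Y" and eq: "(\<lambda>i\<in>I. rr (\<iota> i) s) = (\<lambda>i\<in>I. rr (\<iota> i) t)"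
    show "s = t"
    proof
      fix x show "s x = t x"
      proof (cases "x \<in> CO Y")
        case False then show ?thesis using R_ext[OF s False] R_ext[OF t False] by simp
      next
        case True
        then obtain X \<psi> where x: "x = (X, \<psi>)" and X: "X \<in> Obj C1" and p: "\<psi> \<in> hom C2 (Fo X) Y"
          using CO_iff by (cases x) auto
        have "\<forall>i\<in>I. res (De X \<psi> i) (s (X, \<psi>)) = res (De X \<psi> i) (t (X, \<psi>))"
        proof
          fix i assume i: "i \<in> I"
          have Xi: "DX X \<psi> i \<in> Obj C1" and ei: "De X \<psi> i \<in> hom C1 (DX X \<psi> i) X"
            and ri: "Dr X \<psi> i \<in> hom C2 (Fo (DX X \<psi> i)) (Ys i)"
            and sq: "Cmp C2 \<psi> (Fm (De X \<psi> i)) = Cmp C2 (\<iota> i) (Dr X \<psi> i)" using dD[OF X p] i by blast+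
          have io: "\<iota> i \<in> hom C2 (Ys i) Y" using iota i by blast
          have h: "Cmp C2 (\<iota> i) (Dr X \<psi> i) \<in> hom C2 (Fo (DX X \<psi> i)) Y" using cat_comp[OF c2 ri io] .
          have "res (De X \<psi> i) (s (X, \<psi>)) = s (DX X \<psi> i, Cmp C2 (\<iota> i) (Dr X \<psi> i))"
            using R_compat[OF s Xi h X p ei sq] .
          also have "\<dots> = rr (\<iota> i) s (DX X \<psi> i, Dr X \<psi> i)" using rr_apply[OF io Xi ri, of s] by simp
          also have "\<dots> = rr (\<iota> i) t (DX X \<psi> i, Dr X \<psi> i)" using fun_cong[OF eq, of i] i by simp
          also have "\<dots> = t (DX X \<psi> i, Cmp C2 (\<iota> i) (Dr X \<psi> i))" using rr_apply[OF io Xi ri, of t] by simp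
          also have "\<dots> = res (De X \<psi> i) (t (X, \<psi>))" using R_compat[OF t Xi h X p ei sq] by simp
          finally show "res (De X \<psi> i) (s (X, \<psi>)) = res (De X \<psi> i) (t (X, \<psi>))" .
        qed
        then show ?thesis using dec_unique[OF d[OF X p] R_val[OF s X p] R_val[OF t X p]] x by simp
      qed
    qed
  qed
  have img1: "(\<lambda>s. \<lambda>i\<in>I. rr (\<iota> i) s) ` R Y \<subseteq> (\<Pi>\<^sub>E i\<in>I. R (Ys i))"
    using rr_hom iota by (auto simp: restrict_PiE_iff)
  have img2: "t \<in> (\<lambda>s. \<lambda>i\<in>I. rr (\<iota> i) s) ` R Y" if t: "t \<in> (\<Pi>\<^sub>E i\<in>I. R (Ys i))" for t
  proof -
    define P where "P X \<psi> u \<longleftrightarrow> u \<in> Fp X \<and> (\<forall>i\<in>I. res (De X \<psi> i) u = t i (DX X \<psi> i, Dr X \<psi> i))" for X \<psi> u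
    define s where "s = restrict (\<lambda>x. SOME u. P (fst x) (snd x) u) (CO Y)"
    have S1: "P X \<psi> (s (X, \<psi>))" if X: "X \<in> Obj C1" and p: "\<psi> \<in> hom C2 (Fo X) Y" for X \<psi>
    proof -
      have "\<exists>u. P X \<psi> u" using dec_ex[OF d[OF X p] t] unfolding P_def by blast
      then have "P X \<psi> (SOME u. P X \<psi> u)" by (rule someI_ex)
      then show ?thesis unfolding s_def using X p CO_iff by simp
    qed
    have sR: "s \<in> R Y"
    proof (rule R_I)
      show "s \<in> extensional (CO Y)" unfolding s_def by simp
    next
      fix X \<psi> assume "X \<in> Obj C1" "\<psi> \<in> hom C2 (Fo X) Y"
      then show "s (X, \<psi>) \<in> Fp X" using S1 unfolding P_def by blast
    next
      fix X1 \<psi>1 X2 \<psi>2 f assume a: "X1 \<in> Obj C1" "\<psi>1 \<in> hom C2 (Fo X1) Y" "X2 \<in> Obj C1"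
        "\<psi>2 \<in> hom C2 (Fo X2) Y" "f \<in> hom C1 X1 X2" "Cmp C2 \<psi>2 (Fm f) = \<psi>1"
      have s1: "s (X1, \<psi>1) \<in> Fp X1" "\<forall>i\<in>I. res (De X1 \<psi>1 i) (s (X1, \<psi>1)) = t i (DX X1 \<psi>1 i, Dr X1 \<psi>1 i)"
        using S1[OF a(1) a(2)] unfolding P_def by blast+
      have s2: "s (X2, \<psi>2) \<in> Fp X2" "\<forall>i\<in>I. res (De X2 \<psi>2 i) (s (X2, \<psi>2)) = t i (DX X2 \<psi>2 i, Dr X2 \<psi>2 i)"
        using S1[OF a(3) a(4)] unfolding P_def by blast+
      have rf: "res f (s (X2, \<psi>2)) \<in> Fp X1" using res_hom[OF a(5) s2(1)] .
      show "res f (s (X2, \<psi>2)) = s (X1, \<psi>1)"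
      proof (rule dec_unique[OF d[OF a(1) a(2)] rf s1(1)], rule ballI)
        fix i assume i: "i \<in> I"
        have Xi: "DX X1 \<psi>1 i \<in> Obj C1" and ei: "De X1 \<psi>1 i \<in> hom C1 (DX X1 \<psi>1 i) X1"
          and ri: "Dr X1 \<psi>1 i \<in> hom C2 (Fo (DX X1 \<psi>1 i)) (Ys i)"
          and sq: "Cmp C2 \<psi>1 (Fm (De X1 \<psi>1 i)) = Cmp C2 (\<iota> i) (Dr X1 \<psi>1 i)" using dD[OF a(1) a(2)] i by blast+
        have sq': "Cmp C2 \<psi>2 (Fm (Cmp C1 f (De X1 \<psi>1 i))) = Cmp C2 (\<iota> i) (Dr X1 \<psi>1 i)"
          using F_comp[OF ei a(5)] cat_assoc[OF c2 F_hom[OF ei] F_hom[OF a(5)] a(4)] a(6) sq by simp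
        have "res (De X1 \<psi>1 i) (res f (s (X2, \<psi>2))) = res (Cmp C1 f (De X1 \<psi>1 i)) (s (X2, \<psi>2))"
          using res_comp[OF ei a(5) s2(1)] by simp
        also have "\<dots> = t i (DX X1 \<psi>1 i, Dr X1 \<psi>1 i)"
          using dec_L[OF d[OF a(3) a(4)] t s2(1) s2(2) i Xi ri cat_comp[OF c1 ei a(5)] sq'] .
        also have "\<dots> = res (De X1 \<psi>1 i) (s (X1, \<psi>1))" using s1(2) i by simp
        finally show "res (De X1 \<psi>1 i) (res f (s (X2, \<psi>2))) = res (De X1 \<psi>1 i) (s (X1, \<psi>1))" .
      qed
    qed
    have "(\<lambda>i\<in>I. rr (\<iota> i) s) = t"
    proof
      fix i show "(\<lambda>i\<in>I. rr (\<iota> i) s) i = t i"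
      proof (cases "i \<in> I")
        case False then show ?thesis using PiE_arb[OF t False] by simp
      next
        case i: True
        have io: "\<iota> i \<in> hom C2 (Ys i) Y" using iota i by blast
        have ti: "t i \<in> R (Ys i)" using t i by blast
        have "rr (\<iota> i) s = t i"
        proof
          fix x show "rr (\<iota> i) s x = t i x"
          proof (cases "x \<in> CO (Ys i)")
            case False then show ?thesis using rr_out[OF io False, of s] R_ext[OF ti False] by simp
          next
            case True
            then obtain A \<rho> where x: "x = (A, \<rho>)" and A: "A \<in> Obj C1" and r: "\<rho> \<in> hom C2 (Fo A) (Ys i)"
              using CO_iff by (cases x) auto
            have h: "Cmp C2 (\<iota> i) \<rho> \<in> hom C2 (Fo A) Y" using cat_comp[OF c2 r io] .
            have sA: "s (A, Cmp C2 (\<iota> i) \<rho>) \<in> Fp A"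
              "\<forall>j\<in>I. res (De A (Cmp C2 (\<iota> i) \<rho>) j) (s (A, Cmp C2 (\<iota> i) \<rho>)) =
                 t j (DX A (Cmp C2 (\<iota> i) \<rho>) j, Dr A (Cmp C2 (\<iota> i) \<rho>) j)"
              using S1[OF A h] unfolding P_def by blast+
            have sq: "Cmp C2 (Cmp C2 (\<iota> i) \<rho>) (Fm (Idt C1 A)) = Cmp C2 (\<iota> i) \<rho>"
              using F_id[OF A] cat_idr[OF c2 h] by simp
            have "rr (\<iota> i) s (A, \<rho>) = s (A, Cmp C2 (\<iota> i) \<rho>)" using rr_apply[OF io A r] .
            also have "\<dots> = res (Idt C1 A) (s (A, Cmp C2 (\<iota> i) \<rho>))" using res_id[OF A sA(1)] by simp
            also have "\<dots> = t i (A, \<rho>)" using dec_L[OF d[OF A h] t sA(1) sA(2) i A r cat_id[OF c1 A] sq] .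
            finally show ?thesis using x by simp
          qed
        qed
        then show ?thesis using i by simp
      qed
    qed
    then show ?thesis using imageI[OF sR, of "\<lambda>s. \<lambda>i\<in>I. rr (\<iota> i) s"] by simp
  qed
  have "(\<lambda>s. \<lambda>i\<in>I. rr (\<iota> i) s) ` R Y = (\<Pi>\<^sub>E i\<in>I. R (Ys i))"
    by (rule equalityI[OF img1 subsetI]) (rule img2)
  then show ?thesis unfolding bij_betw_def using inj by blast
qed

lemma result: "extensive_presheaf ty C2 R rr"
  unfolding extensive_presheaf_def using ran_presheaf ran_bij by blast

end

theorem mainTheorem3:
  fixes C1 :: "('o1, 'm1) category" and C2 :: "('o2, 'm2) category"
    and Fo :: "'o1 \<Rightarrow> 'o2" and Fm :: "'m1 \<Rightarrow> 'm2"
    and Fp :: "'o1 \<Rightarrow> 'v set" and res :: "'m1 \<Rightarrow> 'v \<Rightarrow> 'v"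
  assumes "is_functor C1 C2 Fo Fm"
    and "inverts_coproducts TYPE('i) C1 C2 Fo Fm"
    and "extensive_cat TYPE('i) C2"
    and "extensive_presheaf TYPE('i) C1 Fp res"
  shows "extensive_presheaf TYPE('i) C2 (ran_obj C1 C2 Fo Fm Fp res) (ran_res C1 C2 Fo)"
proof -
  interpret kan "TYPE('i)" C1 C2 Fo Fm Fp res using assms by unfold_locales
  show ?thesis by (rule result)
qed



end
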